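(* Let $\tau$ be a continuous distributive triangle function on $\Delta^+$, $\Sigma$ a $\sigma$-ring of subsets of $\Omega\ne\emptyset$, and $\gamma^1,\gamma^2$ $\tau$-decomposable measures on $\Sigma$ continuous from below. If a measurable $f:\Omega\to[0,+\infty]$ is $\gamma^i$-integrable on $E\in\Sigma$ for $i=1,2$, then $f$ is $(\gamma^1\oplus_\tau\gamma^2)$-integrable on $E$ and $$\int_E f\,d(\gamma^1\oplus_\tau\gamma^2)=\int_E f\,d\gamma^1\ \oplus_\tau\ \int_E f\,d\gamma^2,$$ where $(\gamma^1\oplus_\tau\gamma^2)_F:=\tau(\gamma^1_F,\gamma^2_F)$ for $F\in\Sigma$.
   Context: $\Delta^+$: functions $F:[-\infty,+\infty]\to[0,1]$ non-decreasing, left-continuous on $\mathbb{R}$, $F(x)=0$ for $x\le0$, $F(+\infty)=1$, ordered pointwise; $\varepsilon_a(x)=1$ if $x>a$, else $0$. Triangle function: symmetric, associative $\tau:\Delta^+\times\Delta^+\to\Delta^+$, non-decreasing in each variable, identity $\varepsilon_0$; $G\oplus_\tau H=\tau(G,H)$, $\bigoplus_{k=1}^nG_k=\tau(G_1,\bigoplus_{k=2}^nG_k)$. $c\odot G=\varepsilon_0$ if $c=0$, $(c\odot G)(x)=G(x/c)$ if $c>0$; $\tau$ distributive if $c\odot(G\oplus H)=(c\odot G)\oplus(c\odot H)$ for all $c\ge0$. Convergence in $\Delta^+$ is weak convergence; $\tau$ continuous if continuous for it. $\tau$-decomposable measure on a ring $\Sigma$: $\gamma:\Sigma\to\Delta^+$,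 $\gamma_\emptyset=\varepsilon_0$, $\gamma_{E\cup F}=\tau(\gamma_E,\gamma_F)$ for disjoint $E,F$; continuous from below: $\gamma_{E_n}\to\gamma_E$ whenever $E_n\subseteq E_{n+1}$, $\bigcup E_n=E$ in $\Sigma$. Simple function $\sum_{i=1}^nx_i\chi_{E_i}$ ($x_i\in[0,\infty)$, $E_i\in\Sigma$ pairwise disjoint), $\int_Ef\,d\gamma=\bigoplus_ix_i\odot\gamma_{E\cap E_i}$. Measurable: pointwise limit of simple functions. $\mathcal S_{f,E}$: simple $\mathfrak f\le f$ on $E$. $f$ is $\gamma$-integrable on $E$ if some $H\in\Delta^+$ satisfies $\int_E\mathfrak f\,d\gamma\ge H$ for all $\mathfrak f\in\mathcal S_{f,E}$; then $\int_Ef\,d\gamma=\inf\{\int_E\mathfrak f\,d\gamma:\mathfrak f\in\mathcal S_{f,E}\}$ in $(\Delta^+,\le)$. *)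

theory Defs
  imports "HOL-Analysis.Analysis"
begin

type_synonym dfun = "ereal \<Rightarrow> real"

definition Dplus :: "dfun set" where
  "Dplus = {F. (\<forall>x. 0 \<le> F x \<and> F x \<le> 1) \<and> mono F
     \<and> (\<forall>x::real. ((\<lambda>y. F (ereal y)) \<longlongrightarrow> F (ereal x)) (at_left x))
     \<and> (\<forall>x. x \<le> 0 \<longrightarrow> F x = 0) \<and> F \<infinity> = 1}"

definition eps :: "real \<Rightarrow> dfun" where
  "eps a = (\<lambda>x. if x > ereal a then 1 else 0)"

definition dle :: "dfun \<Rightarrow> dfun \<Rightarrow> bool" where
  "dle F G \<longleftrightarrow> (\<forall>x. F x \<le> G x)"

definition weak_conv :: "(nat \<Rightarrow> dfun) \<Rightarrow> dfun \<Rightarrow> bool" where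
  "weak_conv Fs F \<longleftrightarrow>
     (\<forall>x::real. isCont (\<lambda>y. F (ereal y)) x \<longrightarrow> (\<lambda>n. Fs n (ereal x)) \<longlonglongrightarrow> F (ereal x))"

definition triangle_function :: "(dfun \<Rightarrow> dfun \<Rightarrow> dfun) \<Rightarrow> bool" where
  "triangle_function \<tau> \<longleftrightarrow>
     (\<forall>F\<in>Dplus. \<forall>G\<in>Dplus. \<tau> F G \<in> Dplus)
   \<and> (\<forall>F\<in>Dplus. \<forall>G\<in>Dplus. \<tau> F G = \<tau> G F)
   \<and> (\<forall>F\<in>Dplus. \<forall>G\<in>Dplus. \<forall>H\<in>Dplus. \<tau> F (\<tau> G H) = \<tau> (\<tau> F G) H)
   \<and> (\<forall>F\<in>Dplus. \<forall>G\<in>Dplus. \<forall>H\<in>Dplus. dle F G \<longrightarrow> dle (\<tau> F H) (\<tau> G H))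
   \<and> (\<forall>F\<in>Dplus. \<tau> F (eps 0) = F)"

definition tf_continuous :: "(dfun \<Rightarrow> dfun \<Rightarrow> dfun) \<Rightarrow> bool" where
  "tf_continuous \<tau> \<longleftrightarrow>
     (\<forall>Fs F Gs G. (\<forall>n. Fs n \<in> Dplus) \<and> F \<in> Dplus \<and> (\<forall>n. Gs n \<in> Dplus) \<and> G \<in> Dplus
        \<and> weak_conv Fs F \<and> weak_conv Gs G
        \<longrightarrow> weak_conv (\<lambda>n. \<tau> (Fs n) (Gs n)) (\<tau> F G))"

definition smult_d :: "real \<Rightarrow> dfun \<Rightarrow> dfun" where
  "smult_d c G = (if c = 0 then eps 0 else (\<lambda>x. G (x / ereal c)))"

definition tf_distributive :: "(dfun \<Rightarrow> dfun \<Rightarrow> dfun) \<Rightarrow> bool" where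
  "tf_distributive \<tau> \<longleftrightarrow>
     (\<forall>c\<ge>0. \<forall>G\<in>Dplus. \<forall>H\<in>Dplus. smult_d c (\<tau> G H) = \<tau> (smult_d c G) (smult_d c H))"

definition dsum :: "(dfun \<Rightarrow> dfun \<Rightarrow> dfun) \<Rightarrow> dfun list \<Rightarrow> dfun" where
  "dsum \<tau> Gs = foldr \<tau> Gs (eps 0)"

definition sigma_ring :: "'a set \<Rightarrow> 'a set set \<Rightarrow> bool" where
  "sigma_ring \<Omega> \<Sigma> \<longleftrightarrow> \<Sigma> \<subseteq> Pow \<Omega> \<and> {} \<in> \<Sigma>
     \<and> (\<forall>A\<in>\<Sigma>. \<forall>B\<in>\<Sigma>. A - B \<in> \<Sigma>)
     \<and> (\<forall>A::nat \<Rightarrow> 'a set. range A \<subseteq> \<Sigma> \<longrightarrow> \<Union>(range A) \<in> \<Sigma>)"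

definition decomposable :: "(dfun \<Rightarrow> dfun \<Rightarrow> dfun) \<Rightarrow> 'a set set \<Rightarrow> ('a set \<Rightarrow> dfun) \<Rightarrow> bool" where
  "decomposable \<tau> \<Sigma> \<gamma> \<longleftrightarrow> (\<forall>E\<in>\<Sigma>. \<gamma> E \<in> Dplus) \<and> \<gamma> {} = eps 0
     \<and> (\<forall>E\<in>\<Sigma>. \<forall>F\<in>\<Sigma>. E \<inter> F = {} \<longrightarrow> \<gamma> (E \<union> F) = \<tau> (\<gamma> E) (\<gamma> F))"

definition cont_below :: "'a set set \<Rightarrow> ('a set \<Rightarrow> dfun) \<Rightarrow> bool" where
  "cont_below \<Sigma> \<gamma> \<longleftrightarrow> (\<forall>A::nat \<Rightarrow> 'a set. (\<forall>n. A n \<in> \<Sigma>) \<and> incseq A \<and> \<Union>(range A) \<in> \<Sigma>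
       \<longrightarrow> weak_conv (\<lambda>n. \<gamma> (A n)) (\<gamma> (\<Union>(range A))))"

definition msum :: "(dfun \<Rightarrow> dfun \<Rightarrow> dfun) \<Rightarrow> ('a set \<Rightarrow> dfun) \<Rightarrow> ('a set \<Rightarrow> dfun) \<Rightarrow> ('a set \<Rightarrow> dfun)" where
  "msum \<tau> \<gamma>1 \<gamma>2 = (\<lambda>F. \<tau> (\<gamma>1 F) (\<gamma>2 F))"

text \<open>A simple function \<Sum> x_i \<chi>_{E_i} is represented by the list of pairs (x_i, E_i).\<close>
definition valid_simple :: "'a set set \<Rightarrow> (real \<times> 'a set) list \<Rightarrow> bool" where
  "valid_simple \<Sigma> s \<longleftrightarrow> (\<forall>(x, E)\<in>set s. 0 \<le> x \<and> E \<in> \<Sigma>)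
     \<and> (\<forall>i<length s. \<forall>j<length s. i \<noteq> j \<longrightarrow> snd (s ! i) \<inter> snd (s ! j) = {})"

definition simple_eval :: "(real \<times> 'a set) list \<Rightarrow> 'a \<Rightarrow> ennreal" where
  "simple_eval s \<omega> = sum_list (map (\<lambda>(x, E). if \<omega> \<in> E then ennreal x else 0) s)"

definition simple_int :: "(dfun \<Rightarrow> dfun \<Rightarrow> dfun) \<Rightarrow> ('a set \<Rightarrow> dfun) \<Rightarrow> (real \<times> 'a set) list \<Rightarrow> 'a set \<Rightarrow> dfun" where
  "simple_int \<tau> \<gamma> s E = dsum \<tau> (map (\<lambda>(x, Ei). smult_d x (\<gamma> (E \<inter> Ei))) s)"

definition measurable_fn :: "'a set \<Rightarrow> 'a set set \<Rightarrow> ('a \<Rightarrow> ennreal) \<Rightarrow> bool" where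
  "measurable_fn \<Omega> \<Sigma> f \<longleftrightarrow> (\<exists>s::nat \<Rightarrow> (real \<times> 'a set) list. (\<forall>n. valid_simple \<Sigma> (s n))
      \<and> (\<forall>\<omega>\<in>\<Omega>. (\<lambda>n. simple_eval (s n) \<omega>) \<longlonglongrightarrow> f \<omega>))"

definition S_set :: "'a set set \<Rightarrow> ('a \<Rightarrow> ennreal) \<Rightarrow> 'a set \<Rightarrow> (real \<times> 'a set) list set" where
  "S_set \<Sigma> f E = {s. valid_simple \<Sigma> s \<and> (\<forall>\<omega>\<in>E. simple_eval s \<omega> \<le> f \<omega>)}"

definition d_integrable :: "(dfun \<Rightarrow> dfun \<Rightarrow> dfun) \<Rightarrow> 'a set set \<Rightarrow> ('a set \<Rightarrow> dfun) \<Rightarrow> ('a \<Rightarrow> ennreal) \<Rightarrow> 'a set \<Rightarrow> bool" where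
  "d_integrable \<tau> \<Sigma> \<gamma> f E \<longleftrightarrow> (\<exists>H\<in>Dplus. \<forall>s\<in>S_set \<Sigma> f E. dle H (simple_int \<tau> \<gamma> s E))"

definition is_dinf :: "dfun set \<Rightarrow> dfun \<Rightarrow> bool" where
  "is_dinf S H \<longleftrightarrow> H \<in> Dplus \<and> (\<forall>G\<in>S. dle H G) \<and> (\<forall>K\<in>Dplus. (\<forall>G\<in>S. dle K G) \<longrightarrow> dle K H)"

definition d_integral :: "(dfun \<Rightarrow> dfun \<Rightarrow> dfun) \<Rightarrow> 'a set set \<Rightarrow> ('a set \<Rightarrow> dfun) \<Rightarrow> ('a \<Rightarrow> ennreal) \<Rightarrow> 'a set \<Rightarrow> dfun" where
  "d_integral \<tau> \<Sigma> \<gamma> f E = (THE H. is_dinf ((\<lambda>s. simple_int \<tau> \<gamma> s E) ` S_set \<Sigma> f E) H)"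

end

theory Submission
  imports Defs
begin

lemma DplusD:
  assumes "F \<in> Dplus"
  shows "\<And>x. 0 \<le> F x" "\<And>x. F x \<le> 1" "mono F" "\<And>x. x \<le> 0 \<Longrightarrow> F x = 0" "F \<infinity> = 1"
    "\<And>x::real. ((\<lambda>y. F (ereal y)) \<longlongrightarrow> F (ereal x)) (at_left x)"
  using assms unfolding Dplus_def by auto

lemma Dplus_minf: "F \<in> Dplus \<Longrightarrow> F (-\<infinity>) = 0"
  using DplusD(4)[of F "-\<infinity>"] by simp

lemma Dplus_monoD: "F \<in> Dplus \<Longrightarrow> x \<le> y \<Longrightarrow> F x \<le> F y"
  using DplusD(3) by (auto simp: mono_def)

lemma dle_refl: "dle F F" by (simp add: dle_def)
lemma dle_trans: "dle F G \<Longrightarrow> dle G H \<Longrightarrow> dle F H"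
  unfolding dle_def by (meson order_trans)
lemma dle_antisym: "dle F G \<Longrightarrow> dle G F \<Longrightarrow> F = G"
  unfolding dle_def by (auto intro!: ext antisym)

lemma eps0_Dplus: "eps 0 \<in> Dplus"
proof -
  have lc: "((\<lambda>y. eps 0 (ereal y)) \<longlongrightarrow> eps 0 (ereal x)) (at_left x)" for x :: real
  proof (cases "x \<le> 0")
    case True
    have "eventually (\<lambda>y. eps 0 (ereal y) = eps 0 (ereal x)) (at_left x)"
      using True unfolding eventually_at_left_field
      by (intro exI[of _ "x - 1"]) (auto simp: eps_def)
    then show ?thesis by (rule tendsto_eventually)
  next
    case False
    have "eventually (\<lambda>y. eps 0 (ereal y) = eps 0 (ereal x)) (at_left x)"
      using False unfolding eventually_at_left_field
      by (intro exI[of _ 0]) (auto simp: eps_def)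
    then show ?thesis by (rule tendsto_eventually)
  qed
  have "x \<le> 0 \<Longrightarrow> \<not> ereal 0 < x" for x :: ereal by (simp add: zero_ereal_def[symmetric])
  then show ?thesis unfolding Dplus_def
    using lc by (auto simp: eps_def mono_def)
qed

lemma dle_eps0: "F \<in> Dplus \<Longrightarrow> dle F (eps 0)"
  unfolding dle_def eps_def using DplusD[of F] by (auto simp: not_less zero_ereal_def[symmetric])

lemma smult_0[simp]: "smult_d 0 G = eps 0" by (simp add: smult_d_def)

lemma smult_eps0: "0 \<le> c \<Longrightarrow> smult_d c (eps 0) = eps 0"
proof (cases "c = 0")
  case False
  assume "0 \<le> c"
  then have c: "c > 0" using False by simp
  have "(ereal 0 < x / ereal c) = (ereal 0 < x)" for x
  proof (cases x)
    case (real r)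
    then show ?thesis using c by (simp add: zero_less_divide_iff)
  qed (use c in auto)
  then show ?thesis using False unfolding smult_d_def eps_def by (auto intro!: ext)
qed simp

lemma ereal_div_pos_le0: "c > 0 \<Longrightarrow> x \<le> 0 \<Longrightarrow> x / ereal c \<le> (0::ereal)"
  by (cases x) (auto simp: divide_nonpos_pos)

lemma smult_Dplus: assumes "0 \<le> c" "G \<in> Dplus" shows "smult_d c G \<in> Dplus"
proof (cases "c = 0")
  case True then show ?thesis by (simp add: eps0_Dplus)
next
  case False
  then have c: "c > 0" using assms by simp
  have mono: "mono (\<lambda>x. G (x / ereal c))"
    unfolding mono_def using c
    by (auto intro!: Dplus_monoD[OF assms(2)] ereal_divide_right_mono)
  have lc: "((\<lambda>y. G (ereal y / ereal c)) \<longlongrightarrow> G (ereal x / ereal c)) (at_left x)" for x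
  proof -
    have "((\<lambda>y. G (ereal (y / c))) \<longlongrightarrow> G (ereal (x / c))) (at_left x)"
    proof -
      have f: "filterlim (\<lambda>y. y / c) (at_left (x / c)) (at_left x)"
      proof (rule tendsto_imp_filterlim_at_left)
        show "((\<lambda>y. y / c) \<longlongrightarrow> x / c) (at_left x)"
          using c by (intro tendsto_intros) auto
        show "\<forall>\<^sub>F y in at_left x. y / c < x / c"
          using c unfolding eventually_at_left_field
          by (intro exI[of _ "x - 1"]) (auto intro: divide_strict_right_mono)
      qed
      show ?thesis using filterlim_compose[OF DplusD(6)[OF assms(2), of "x/c"] f] by simp
    qed
    then show ?thesis using c by simp
  qed
  show ?thesis unfolding Dplus_def smult_d_def using False c assms mono lc
    by (auto simp: DplusD ereal_div_pos_le0)
qed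

lemma smult_mono_scalar:
  assumes "0 \<le> x" "x \<le> y" "G \<in> Dplus"
  shows "dle (smult_d y G) (smult_d x G)"
proof (cases "x = 0")
  case True
  then show ?thesis using smult_Dplus[OF _ assms(3), of y] assms dle_eps0 by auto
next
  case False
  then have xp: "x > 0" "y > 0" using assms by auto
  have "G (t / ereal y) \<le> G (t / ereal x)" for t
  proof (cases t)
    case (real r)
    show ?thesis
    proof (cases "r \<le> 0")
      case True
      then show ?thesis using real xp DplusD[OF assms(3)]
        by (simp add: divide_nonpos_pos)
    next
      case False
      then have "r / y \<le> r / x" using xp assms by (simp add: frac_le)
      then show ?thesis using real xp by (auto intro!: Dplus_monoD[OF assms(3)])
    qed
  qed (use xp in auto)
  then show ?thesis using xp unfolding dle_def smult_d_def by auto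
qed

lemma valid_Nil[simp]: "valid_simple \<Sigma> []" by (simp add: valid_simple_def)

lemma valid_Cons: "valid_simple \<Sigma> ((x,G)#s) \<longleftrightarrow>
   0 \<le> x \<and> G \<in> \<Sigma> \<and> (\<forall>(y,H)\<in>set s. G \<inter> H = {}) \<and> valid_simple \<Sigma> s"
proof
  assume v: "valid_simple \<Sigma> ((x,G)#s)"
  have v1: "\<forall>(y, E)\<in>set ((x,G)#s). 0 \<le> y \<and> E \<in> \<Sigma>"
    and v2: "\<forall>i<length ((x,G)#s). \<forall>j<length ((x,G)#s). i \<noteq> j \<longrightarrow> snd (((x,G)#s) ! i) \<inter> snd (((x,G)#s) ! j) = {}"
    using v unfolding valid_simple_def by blast+
  have d: "\<And>i j. i < Suc (length s) \<Longrightarrow> j < Suc (length s) \<Longrightarrow> i \<noteq> j \<Longrightarrow>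
      snd (((x,G)#s) ! i) \<inter> snd (((x,G)#s) ! j) = {}"
    using v2 by simp
  have c3: "G \<inter> H = {}" if "(y,H) \<in> set s" for y H
  proof -
    have "\<exists>j<length s. s ! j = (y,H)" using that by (simp only: in_set_conv_nth)
    then obtain j where j: "j < length s" "s ! j = (y,H)" by (elim exE conjE)
    show ?thesis using d[of 0 "Suc j"] j by simp
  qed
  have c4: "snd (s ! i) \<inter> snd (s ! j) = {}" if "i < length s" "j < length s" "i \<noteq> j" for i j
    using d[of "Suc i" "Suc j"] that by simp
  have c5: "\<forall>(y, E)\<in>set s. 0 \<le> y \<and> E \<in> \<Sigma>" "0 \<le> x" "G \<in> \<Sigma>" using v1 by auto
  have c3': "\<forall>(y,H)\<in>set s. G \<inter> H = {}" using c3 by auto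
  have c6: "valid_simple \<Sigma> s" unfolding valid_simple_def using c4 c5(1) by blast
  show "0 \<le> x \<and> G \<in> \<Sigma> \<and> (\<forall>(y,H)\<in>set s. G \<inter> H = {}) \<and> valid_simple \<Sigma> s"
    using c3' c5 c6 by simp
next
  assume a: "0 \<le> x \<and> G \<in> \<Sigma> \<and> (\<forall>(y,H)\<in>set s. G \<inter> H = {}) \<and> valid_simple \<Sigma> s"
  have "snd (((x,G)#s) ! i) \<inter> snd (((x,G)#s) ! j) = {}"
    if ij: "i < Suc (length s)" "j < Suc (length s)" "i \<noteq> j" for i j
  proof (cases i)
    case 0
    obtain j' where "j = Suc j'" "j' < length s" using ij 0 by (cases j) auto
    then show ?thesis using a 0 nth_mem[of j' s] by (cases "s ! j'") fastforce
  next
    case (Suc i')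
    show ?thesis
    proof (cases j)
      case 0
      then show ?thesis using a Suc ij nth_mem[of i' s] by (cases "s ! i'") fastforce
    next
      case (Suc j')
      have "\<forall>i<length s. \<forall>j<length s. i \<noteq> j \<longrightarrow> snd (s ! i) \<inter> snd (s ! j) = {}"
        using a unfolding valid_simple_def by blast
      then show ?thesis using \<open>i = Suc i'\<close> Suc ij by simp
    qed
  qed
  moreover have "\<forall>(y, E)\<in>set ((x,G)#s). 0 \<le> y \<and> E \<in> \<Sigma>"
    using a unfolding valid_simple_def by auto
  ultimately show "valid_simple \<Sigma> ((x,G)#s)" unfolding valid_simple_def by auto
qed

lemma simple_eval_Nil[simp]: "simple_eval [] \<omega> = 0" by (simp add: simple_eval_def)
lemma simple_eval_Cons[simp]: "simple_eval ((x,G)#s) \<omega> = (if \<omega> \<in> G then ennreal x else 0) + simple_eval s \<omega>"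
  by (simp add: simple_eval_def)

lemma simple_eval_zero: "(\<forall>(y,H)\<in>set s. \<omega> \<notin> H) \<Longrightarrow> simple_eval s \<omega> = 0"
  by (induction s) auto

lemma dsum_Nil[simp]: "dsum \<tau> [] = eps 0" by (simp add: dsum_def)
lemma dsum_Cons[simp]: "dsum \<tau> (a#as) = \<tau> a (dsum \<tau> as)" by (simp add: dsum_def)

lemma simple_int_Nil[simp]: "simple_int \<tau> \<gamma> [] A = eps 0" by (simp add: simple_int_def)
lemma simple_int_Cons[simp]: "simple_int \<tau> \<gamma> ((x,G)#s) A = \<tau> (smult_d x (\<gamma> (A \<inter> G))) (simple_int \<tau> \<gamma> s A)"
  by (simp add: simple_int_def)

context
  fixes \<tau> :: "dfun \<Rightarrow> dfun \<Rightarrow> dfun"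
  assumes tf: "triangle_function \<tau>"
begin

lemma tau_Dplus: "F \<in> Dplus \<Longrightarrow> G \<in> Dplus \<Longrightarrow> \<tau> F G \<in> Dplus"
  using tf unfolding triangle_function_def by blast
lemma tau_comm: "F \<in> Dplus \<Longrightarrow> G \<in> Dplus \<Longrightarrow> \<tau> F G = \<tau> G F"
  using tf unfolding triangle_function_def by blast
lemma tau_assoc: "F \<in> Dplus \<Longrightarrow> G \<in> Dplus \<Longrightarrow> H \<in> Dplus \<Longrightarrow> \<tau> F (\<tau> G H) = \<tau> (\<tau> F G) H"
  using tf unfolding triangle_function_def by blast
lemma tau_mono1: "F \<in> Dplus \<Longrightarrow> G \<in> Dplus \<Longrightarrow> H \<in> Dplus \<Longrightarrow> dle F G \<Longrightarrow> dle (\<tau> F H) (\<tau> G H)"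
  using tf unfolding triangle_function_def by blast
lemma tau_eps_r: "F \<in> Dplus \<Longrightarrow> \<tau> F (eps 0) = F"
  using tf unfolding triangle_function_def by blast
lemma tau_eps_l: "F \<in> Dplus \<Longrightarrow> \<tau> (eps 0) F = F"
  using tau_eps_r tau_comm eps0_Dplus by metis
lemma tau_mono2: "F \<in> Dplus \<Longrightarrow> G \<in> Dplus \<Longrightarrow> H \<in> Dplus \<Longrightarrow> dle F G \<Longrightarrow> dle (\<tau> H F) (\<tau> H G)"
  using tau_mono1 tau_comm by metis
lemma tau_mono: "F \<in> Dplus \<Longrightarrow> G \<in> Dplus \<Longrightarrow> F' \<in> Dplus \<Longrightarrow> G' \<in> Dplus \<Longrightarrow> dle F G \<Longrightarrow> dle F' G'
   \<Longrightarrow> dle (\<tau> F F') (\<tau> G G')"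
  using tau_mono1 tau_mono2 dle_trans tau_Dplus by metis

lemma tau_swap4:
  assumes "a \<in> Dplus" "b \<in> Dplus" "c \<in> Dplus" "d \<in> Dplus"
  shows "\<tau> (\<tau> a b) (\<tau> c d) = \<tau> (\<tau> a c) (\<tau> b d)"
proof -
  have "\<tau> (\<tau> a b) (\<tau> c d) = \<tau> a (\<tau> b (\<tau> c d))" using assms by (simp add: tau_assoc tau_Dplus)
  also have "\<tau> b (\<tau> c d) = \<tau> (\<tau> b c) d" using assms by (simp add: tau_assoc)
  also have "\<tau> b c = \<tau> c b" using assms by (simp add: tau_comm)
  also have "\<tau> (\<tau> c b) d = \<tau> c (\<tau> b d)" using assms by (simp add: tau_assoc)
  also have "\<tau> a (\<tau> c (\<tau> b d)) = \<tau> (\<tau> a c) (\<tau> b d)" using assms by (simp add: tau_assoc tau_Dplus)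
  finally show ?thesis .
qed

lemma dsum_Dplus: "set xs \<subseteq> Dplus \<Longrightarrow> dsum \<tau> xs \<in> Dplus"
  by (induction xs) (auto simp: eps0_Dplus tau_Dplus)

lemma dsum_map_tau:
  assumes "\<forall>i\<in>set xs. a i \<in> Dplus \<and> b i \<in> Dplus"
  shows "dsum \<tau> (map (\<lambda>i. \<tau> (a i) (b i)) xs) = \<tau> (dsum \<tau> (map a xs)) (dsum \<tau> (map b xs))"
  using assms
proof (induction xs)
  case Nil then show ?case by (simp add: tau_eps_r eps0_Dplus)
next
  case (Cons i xs)
  have D: "dsum \<tau> (map a xs) \<in> Dplus" "dsum \<tau> (map b xs) \<in> Dplus"
    using Cons.prems by (auto intro!: dsum_Dplus)
  show ?case using Cons D by (simp add: tau_swap4)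
qed

lemma dsum_mono:
  assumes "\<forall>i\<in>set xs. a i \<in> Dplus \<and> b i \<in> Dplus \<and> dle (a i) (b i)"
  shows "dle (dsum \<tau> (map a xs)) (dsum \<tau> (map b xs))"
  using assms
proof (induction xs)
  case Nil then show ?case by (simp add: dle_refl)
next
  case (Cons i xs)
  have D: "dsum \<tau> (map a xs) \<in> Dplus" "dsum \<tau> (map b xs) \<in> Dplus"
    using Cons.prems by (auto intro!: dsum_Dplus)
  show ?case using Cons D by (simp add: tau_mono)
qed

lemma dsum_eps: "\<forall>i\<in>set xs. a i = eps 0 \<Longrightarrow> dsum \<tau> (map a xs) = eps 0"
  by (induction xs) (auto simp: tau_eps_r eps0_Dplus)

end

lemma sr_diff: "sigma_ring \<Omega> \<Sigma> \<Longrightarrow> A \<in> \<Sigma> \<Longrightarrow> B \<in> \<Sigma> \<Longrightarrow> A - B \<in> \<Sigma>"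
  unfolding sigma_ring_def by blast
lemma sr_int: "sigma_ring \<Omega> \<Sigma> \<Longrightarrow> A \<in> \<Sigma> \<Longrightarrow> B \<in> \<Sigma> \<Longrightarrow> A \<inter> B \<in> \<Sigma>"
proof -
  assume a: "sigma_ring \<Omega> \<Sigma>" "A \<in> \<Sigma>" "B \<in> \<Sigma>"
  have "A \<inter> B = A - (A - B)" by blast
  then show ?thesis using sr_diff[OF a(1) a(2) sr_diff[OF a]] by simp
qed

context
  fixes \<tau> :: "dfun \<Rightarrow> dfun \<Rightarrow> dfun" and \<Omega> :: "'a set" and \<Sigma> and \<gamma> :: "'a set \<Rightarrow> dfun"
  assumes tf: "triangle_function \<tau>" and td: "tf_distributive \<tau>"
    and sr: "sigma_ring \<Omega> \<Sigma>" and dec: "decomposable \<tau> \<Sigma> \<gamma>"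
begin

lemma gam_Dplus: "A \<in> \<Sigma> \<Longrightarrow> \<gamma> A \<in> Dplus" using dec unfolding decomposable_def by blast
lemma gam_empty: "\<gamma> {} = eps 0" using dec unfolding decomposable_def by blast
lemma gam_union: "A \<in> \<Sigma> \<Longrightarrow> B \<in> \<Sigma> \<Longrightarrow> A \<inter> B = {} \<Longrightarrow> \<gamma> (A \<union> B) = \<tau> (\<gamma> A) (\<gamma> B)"
  using dec unfolding decomposable_def by blast

lemma smult_tau: "0 \<le> c \<Longrightarrow> G \<in> Dplus \<Longrightarrow> H \<in> Dplus \<Longrightarrow> smult_d c (\<tau> G H) = \<tau> (smult_d c G) (smult_d c H)"
  using td unfolding tf_distributive_def by blast

lemma I_Dplus: "valid_simple \<Sigma> s \<Longrightarrow> A \<in> \<Sigma> \<Longrightarrow> simple_int \<tau> \<gamma> s A \<in> Dplus"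
proof (induction s)
  case Nil then show ?case by (simp add: eps0_Dplus)
next
  case (Cons p s)
  obtain x G where p: "p = (x,G)" by (cases p)
  have v: "0 \<le> x" "G \<in> \<Sigma>" "valid_simple \<Sigma> s" using Cons.prems unfolding p valid_Cons by auto
  have "smult_d x (\<gamma> (A \<inter> G)) \<in> Dplus"
    using v Cons.prems by (intro smult_Dplus gam_Dplus sr_int[OF sr]) auto
  then show ?case using Cons v unfolding p by (simp add: tau_Dplus[OF tf])
qed

lemma I_empty: "valid_simple \<Sigma> s \<Longrightarrow> (\<forall>(y,H)\<in>set s. A \<inter> H = {}) \<Longrightarrow> simple_int \<tau> \<gamma> s A = eps 0"
proof (induction s)
  case Nil then show ?case by simp
next
  case (Cons p s)
  obtain x G where p: "p = (x,G)" by (cases p)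
  have v: "0 \<le> x" "G \<in> \<Sigma>" "valid_simple \<Sigma> s" using Cons.prems unfolding p valid_Cons by auto
  have e: "A \<inter> G = {}" using Cons.prems p by auto
  have "simple_int \<tau> \<gamma> s A = eps 0" using Cons v by auto
  then show ?case unfolding p using e v by (simp add: gam_empty smult_eps0 tau_eps_r[OF tf] eps0_Dplus)
qed

lemma I_split:
  assumes "valid_simple \<Sigma> s" "A \<in> \<Sigma>" "G \<in> \<Sigma>"
  shows "simple_int \<tau> \<gamma> s A = \<tau> (simple_int \<tau> \<gamma> s (A \<inter> G)) (simple_int \<tau> \<gamma> s (A - G))"
  using assms(1)
proof (induction s)
  case Nil then show ?case by (simp add: tau_eps_r[OF tf] eps0_Dplus)
next
  case (Cons p s)
  obtain x H where p: "p = (x,H)" by (cases p)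
  have v: "0 \<le> x" "H \<in> \<Sigma>" "valid_simple \<Sigma> s" using Cons.prems unfolding p valid_Cons by auto
  have S: "A \<inter> G \<inter> H \<in> \<Sigma>" "(A - G) \<inter> H \<in> \<Sigma>" "A \<inter> G \<in> \<Sigma>" "A - G \<in> \<Sigma>"
    using v assms by (auto intro!: sr_int[OF sr] sr_diff[OF sr])
  have eq: "A \<inter> H = (A \<inter> G \<inter> H) \<union> ((A - G) \<inter> H)" by blast
  have "\<gamma> (A \<inter> H) = \<tau> (\<gamma> (A \<inter> G \<inter> H)) (\<gamma> ((A - G) \<inter> H))"
    unfolding eq using S by (intro gam_union) auto
  then have "smult_d x (\<gamma> (A \<inter> H)) = \<tau> (smult_d x (\<gamma> (A \<inter> G \<inter> H))) (smult_d x (\<gamma> ((A - G) \<inter> H)))"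
    using S v by (simp add: smult_tau gam_Dplus)
  moreover have "simple_int \<tau> \<gamma> s A = \<tau> (simple_int \<tau> \<gamma> s (A \<inter> G)) (simple_int \<tau> \<gamma> s (A - G))"
    using Cons v by simp
  moreover have "smult_d x (\<gamma> (A \<inter> G \<inter> H)) \<in> Dplus" "smult_d x (\<gamma> ((A - G) \<inter> H)) \<in> Dplus"
    "simple_int \<tau> \<gamma> s (A \<inter> G) \<in> Dplus" "simple_int \<tau> \<gamma> s (A - G) \<in> Dplus"
    using S v by (auto intro!: smult_Dplus gam_Dplus I_Dplus)
  ultimately show ?case unfolding p by (simp add: tau_swap4[OF tf])
qed

lemma I_Cons_split:
  assumes "valid_simple \<Sigma> ((x,G)#s)" "A \<in> \<Sigma>"
  shows "simple_int \<tau> \<gamma> ((x,G)#s) A = \<tau> (smult_d x (\<gamma> (A \<inter> G))) (simple_int \<tau> \<gamma> s (A - G))"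
proof -
  have v: "0 \<le> x" "G \<in> \<Sigma>" "valid_simple \<Sigma> s" "\<forall>(y,H)\<in>set s. G \<inter> H = {}"
    using assms unfolding valid_Cons by auto
  have "simple_int \<tau> \<gamma> s A = \<tau> (simple_int \<tau> \<gamma> s (A \<inter> G)) (simple_int \<tau> \<gamma> s (A - G))"
    using I_split v assms by blast
  moreover have "simple_int \<tau> \<gamma> s (A \<inter> G) = eps 0"
    using v by (intro I_empty) auto
  moreover have "simple_int \<tau> \<gamma> s (A - G) \<in> Dplus"
    using v assms by (intro I_Dplus sr_diff[OF sr]) auto
  ultimately show ?thesis by (simp add: tau_eps_l[OF tf])
qed

lemma L1:
  assumes "valid_simple \<Sigma> s" "A \<in> \<Sigma>" "0 \<le> y" "\<forall>\<omega>\<in>A. simple_eval s \<omega> \<le> ennreal y"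
  shows "dle (smult_d y (\<gamma> A)) (simple_int \<tau> \<gamma> s A)"
  using assms
proof (induction s arbitrary: A)
  case Nil
  then have "\<forall>\<omega>\<in>A. False \<or> True" by simp
  show ?case
  proof (cases "y = 0")
    case True then show ?thesis by (simp add: dle_refl)
  next
    case False
    show ?thesis using Nil dle_eps0 smult_Dplus gam_Dplus by simp
  qed
next
  case (Cons p s)
  obtain x G where p: "p = (x,G)" by (cases p)
  have v: "0 \<le> x" "G \<in> \<Sigma>" "valid_simple \<Sigma> s" using Cons.prems unfolding p valid_Cons by auto
  have S: "A \<inter> G \<in> \<Sigma>" "A - G \<in> \<Sigma>" using v Cons.prems by (auto intro!: sr_int[OF sr] sr_diff[OF sr])
  have eq1: "simple_int \<tau> \<gamma> (p#s) A = \<tau> (smult_d x (\<gamma> (A \<inter> G))) (simple_int \<tau> \<gamma> s (A - G))"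
    unfolding p using I_Cons_split Cons.prems p by blast
  have eqA: "A = (A \<inter> G) \<union> (A - G)" by blast
  have "\<gamma> A = \<tau> (\<gamma> (A \<inter> G)) (\<gamma> (A - G))"
    using gam_union[OF S] eqA by (metis Diff_disjoint inf_assoc inf_bot_right)
  then have eq2: "smult_d y (\<gamma> A) = \<tau> (smult_d y (\<gamma> (A \<inter> G))) (smult_d y (\<gamma> (A - G)))"
    using S Cons.prems by (simp add: smult_tau gam_Dplus)
  have d1: "dle (smult_d y (\<gamma> (A \<inter> G))) (smult_d x (\<gamma> (A \<inter> G)))"
  proof (cases "A \<inter> G = {}")
    case True then show ?thesis using v Cons.prems by (simp add: gam_empty smult_eps0 dle_refl)
  next
    case False
    then obtain \<omega> where w: "\<omega> \<in> A" "\<omega> \<in> G" by blast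
    have "ennreal x \<le> simple_eval (p#s) \<omega>" unfolding p using w by simp
    also have "\<dots> \<le> ennreal y" using Cons.prems w by blast
    finally have "x \<le> y" using Cons.prems by (simp add: ennreal_le_iff)
    then show ?thesis using v S by (intro smult_mono_scalar gam_Dplus) auto
  qed
  have d2: "dle (smult_d y (\<gamma> (A - G))) (simple_int \<tau> \<gamma> s (A - G))"
  proof (rule Cons.IH)
    show "\<forall>\<omega>\<in>A - G. simple_eval s \<omega> \<le> ennreal y"
    proof
      fix \<omega> assume "\<omega> \<in> A - G"
      then have "simple_eval s \<omega> = simple_eval (p#s) \<omega>" unfolding p by simp
      then show "simple_eval s \<omega> \<le> ennreal y" using Cons.prems \<open>\<omega> \<in> A - G\<close> by auto
    qed
  qed (use v S Cons.prems in auto)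
  show ?case unfolding eq1 eq2
    using d1 d2 S v Cons.prems
    by (intro tau_mono[OF tf] smult_Dplus gam_Dplus I_Dplus) auto
qed

lemma I_mono:
  assumes "valid_simple \<Sigma> s" "valid_simple \<Sigma> u" "A \<in> \<Sigma>" "\<forall>\<omega>\<in>A. simple_eval s \<omega> \<le> simple_eval u \<omega>"
  shows "dle (simple_int \<tau> \<gamma> u A) (simple_int \<tau> \<gamma> s A)"
  using assms(2-4)
proof (induction u arbitrary: A)
  case Nil
  have "dle (smult_d 0 (\<gamma> A)) (simple_int \<tau> \<gamma> s A)"
    using Nil assms(1) by (intro L1) auto
  then show ?case by simp
next
  case (Cons p u)
  obtain y F where p: "p = (y,F)" by (cases p)
  have v: "0 \<le> y" "F \<in> \<Sigma>" "valid_simple \<Sigma> u" "\<forall>(z,H)\<in>set u. F \<inter> H = {}"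
    using Cons.prems unfolding p valid_Cons by auto
  have S: "A \<inter> F \<in> \<Sigma>" "A - F \<in> \<Sigma>" using v Cons.prems by (auto intro!: sr_int[OF sr] sr_diff[OF sr])
  have eq1: "simple_int \<tau> \<gamma> (p#u) A = \<tau> (smult_d y (\<gamma> (A \<inter> F))) (simple_int \<tau> \<gamma> u (A - F))"
    unfolding p using I_Cons_split Cons.prems p by blast
  have eq2: "simple_int \<tau> \<gamma> s A = \<tau> (simple_int \<tau> \<gamma> s (A \<inter> F)) (simple_int \<tau> \<gamma> s (A - F))"
    using I_split assms(1) Cons.prems v by blast
  have d1: "dle (smult_d y (\<gamma> (A \<inter> F))) (simple_int \<tau> \<gamma> s (A \<inter> F))"
  proof (rule L1)
    show "\<forall>\<omega>\<in>A \<inter> F. simple_eval s \<omega> \<le> ennreal y"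
    proof
      fix \<omega> assume w: "\<omega> \<in> A \<inter> F"
      have "simple_eval u \<omega> = 0" using v w by (intro simple_eval_zero) auto
      then have "simple_eval (p#u) \<omega> = ennreal y" using w unfolding p by simp
      then show "simple_eval s \<omega> \<le> ennreal y" using Cons.prems w by auto
    qed
  qed (use assms(1) S v in auto)
  have d2: "dle (simple_int \<tau> \<gamma> u (A - F)) (simple_int \<tau> \<gamma> s (A - F))"
  proof (rule Cons.IH)
    show "\<forall>\<omega>\<in>A - F. simple_eval s \<omega> \<le> simple_eval u \<omega>"
    proof
      fix \<omega> assume w: "\<omega> \<in> A - F"
      then have "simple_eval u \<omega> = simple_eval (p#u) \<omega>" unfolding p by simp
      then show "simple_eval s \<omega> \<le> simple_eval u \<omega>" using Cons.prems w by auto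
    qed
  qed (use v S in auto)
  show ?case unfolding eq1 eq2
    using d1 d2 S v assms(1)
    by (intro tau_mono[OF tf] smult_Dplus gam_Dplus I_Dplus) auto
qed

end

fun ins :: "real \<times> 'a set \<Rightarrow> (real \<times> 'a set) list \<Rightarrow> (real \<times> 'a set) list" where
  "ins (y,F) [] = [(y,F)]"
| "ins (y,F) ((x,G)#s) = (max x y, G \<inter> F) # (x, G - F) # ins (y, F - G) s"

fun join :: "(real \<times> 'a set) list \<Rightarrow> (real \<times> 'a set) list \<Rightarrow> (real \<times> 'a set) list" where
  "join s [] = s"
| "join s (p#t) = join (ins p s) t"

lemma ins_sets: "(z,H) \<in> set (ins (y,F) s) \<Longrightarrow> H \<subseteq> F \<union> \<Union>(snd ` set s)"
proof (induction s arbitrary: F z H)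
  case Nil then show ?case by auto
next
  case (Cons p s)
  obtain x G where p: "p = (x,G)" by (cases p)
  show ?case using Cons.prems unfolding p
  proof (auto simp del: ins.simps simp add: ins.simps(2))
    fix w assume a: "(z,H) \<in> set (ins (y, F - G) s)" "w \<in> H" "w \<notin> F" "\<forall>p\<in>set s. w \<notin> snd p"
    have "H \<subseteq> (F - G) \<union> \<Union>(snd ` set s)" using Cons.IH[OF a(1)] .
    then show "w \<in> G" using a by auto
  qed
qed

lemma ennreal_max: "ennreal (max a b) = max (ennreal a) (ennreal b)"
proof (cases "a \<le> b")
  case True
  then have "ennreal a \<le> ennreal b" by (rule ennreal_leI)
  then show ?thesis using True by (simp add: max_def)
next
  case False
  then have "ennreal b \<le> ennreal a" by (intro ennreal_leI) simp
  then show ?thesis using False by (simp add: max_def)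
qed

lemma ins_valid:
  assumes sr: "sigma_ring \<Omega> \<Sigma>"
  shows "valid_simple \<Sigma> s \<Longrightarrow> F \<in> \<Sigma> \<Longrightarrow> 0 \<le> y \<Longrightarrow> valid_simple \<Sigma> (ins (y,F) s)"
proof (induction s arbitrary: F)
  case Nil then show ?case by (simp add: valid_Cons)
next
  case (Cons p s)
  obtain x G where p: "p = (x,G)" by (cases p)
  have v: "0 \<le> x" "G \<in> \<Sigma>" "valid_simple \<Sigma> s" "\<forall>(z,H)\<in>set s. G \<inter> H = {}"
    using Cons.prems unfolding p valid_Cons by auto
  have S: "G \<inter> F \<in> \<Sigma>" "G - F \<in> \<Sigma>" "F - G \<in> \<Sigma>"
    using v Cons.prems by (auto intro!: sr_int[OF sr] sr_diff[OF sr])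
  have R: "valid_simple \<Sigma> (ins (y, F - G) s)" using Cons.IH[OF v(3) S(3) Cons.prems(3)] .
  have disj: "G \<inter> H = {}" if "(z,H) \<in> set (ins (y, F - G) s)" for z H
  proof -
    have "H \<subseteq> (F - G) \<union> \<Union>(snd ` set s)" using ins_sets[OF that] .
    moreover have "G \<inter> \<Union>(snd ` set s) = {}" using v(4) by fastforce
    ultimately show ?thesis by blast
  qed
  have A: "\<forall>(z,H)\<in>set (ins (y, F - G) s). (G - F) \<inter> H = {}" using disj by blast
  have B: "\<forall>(z,H)\<in>set ((x, G - F) # ins (y, F - G) s). (G \<inter> F) \<inter> H = {}" using disj by auto
  have "valid_simple \<Sigma> ((x, G - F) # ins (y, F - G) s)"
    unfolding valid_Cons using A R S v by blast
  then show ?case unfolding p ins.simps valid_Cons using B S v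
    by (simp add: le_max_iff_disj)
qed

lemma ins_eval:
  "valid_simple \<Sigma> s \<Longrightarrow> simple_eval (ins (y,F) s) \<omega> = max (simple_eval s \<omega>) (if \<omega> \<in> F then ennreal y else 0)"
proof (induction s arbitrary: F)
  case Nil then show ?case by simp
next
  case (Cons p s)
  obtain x G where p: "p = (x,G)" by (cases p)
  have v: "valid_simple \<Sigma> s" "\<forall>(z,H)\<in>set s. G \<inter> H = {}"
    using Cons.prems unfolding p valid_Cons by auto
  have IH: "simple_eval (ins (y, F - G) s) \<omega> = max (simple_eval s \<omega>) (if \<omega> \<in> F - G then ennreal y else 0)"
    using Cons.IH[OF v(1)] .
  show ?case
  proof (cases "\<omega> \<in> G")
    case True
    have z: "simple_eval s \<omega> = 0" using v(2) True by (intro simple_eval_zero) blast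
    show ?thesis unfolding p using True z IH by (simp add: ennreal_max)
  next
    case False
    then show ?thesis unfolding p using IH by simp
  qed
qed

lemma join_valid:
  assumes sr: "sigma_ring \<Omega> \<Sigma>"
  shows "valid_simple \<Sigma> s \<Longrightarrow> valid_simple \<Sigma> t \<Longrightarrow> valid_simple \<Sigma> (join s t)"
proof (induction t arbitrary: s)
  case Nil then show ?case by simp
next
  case (Cons p t)
  obtain y F where p: "p = (y,F)" by (cases p)
  have v: "0 \<le> y" "F \<in> \<Sigma>" "valid_simple \<Sigma> t"
    using Cons.prems unfolding p valid_Cons by auto
  show ?case unfolding p join.simps using Cons.IH[OF ins_valid[OF sr Cons.prems(1) v(2,1)] v(3)] .
qed

lemma join_eval:
  assumes sr: "sigma_ring \<Omega> \<Sigma>"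
  shows "valid_simple \<Sigma> s \<Longrightarrow> valid_simple \<Sigma> t \<Longrightarrow> simple_eval (join s t) \<omega> = max (simple_eval s \<omega>) (simple_eval t \<omega>)"
proof (induction t arbitrary: s)
  case Nil then show ?case by simp
next
  case (Cons p t)
  obtain y F where p: "p = (y,F)" by (cases p)
  have v: "0 \<le> y" "F \<in> \<Sigma>" "valid_simple \<Sigma> t" "\<forall>(z,H)\<in>set t. F \<inter> H = {}"
    using Cons.prems unfolding p valid_Cons by auto
  have "simple_eval (join s (p#t)) \<omega> = max (simple_eval (ins (y,F) s) \<omega>) (simple_eval t \<omega>)"
    unfolding p join.simps using Cons.IH[OF ins_valid[OF sr Cons.prems(1) v(2,1)] v(3)] .
  also have "\<dots> = max (max (simple_eval s \<omega>) (if \<omega> \<in> F then ennreal y else 0)) (simple_eval t \<omega>)"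
    using ins_eval[OF Cons.prems(1)] by simp
  also have "\<dots> = max (simple_eval s \<omega>) (simple_eval (p#t) \<omega>)"
  proof (cases "\<omega> \<in> F")
    case True
    have "simple_eval t \<omega> = 0" using v(4) True by (intro simple_eval_zero) blast
    then show ?thesis using True unfolding p by (simp add: max.assoc)
  next
    case False
    then show ?thesis unfolding p by (simp add: max.assoc)
  qed
  finally show ?case .
qed

definition Pinf :: "dfun set \<Rightarrow> ereal \<Rightarrow> real" where
  "Pinf S y = (INF F\<in>S. F y)"

definition glbD :: "dfun set \<Rightarrow> dfun" where
  "glbD S y = (case y of ereal x \<Rightarrow> (SUP z\<in>{..<x}. Pinf S (ereal z)) | PInfty \<Rightarrow> 1 | MInfty \<Rightarrow> 0)"

lemma glbD_PInf[simp]: "glbD S \<infinity> = 1" by (simp add: glbD_def)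
lemma glbD_MInf[simp]: "glbD S (-\<infinity>) = 0" by (simp add: glbD_def)

lemma is_dinf_unique: "is_dinf S G \<Longrightarrow> is_dinf S G' \<Longrightarrow> G = G'"
  unfolding is_dinf_def by (meson dle_antisym)

context
  fixes S :: "dfun set"
  assumes ne: "S \<noteq> {}" and sub: "S \<subseteq> Dplus"
begin

lemma P_bdd: "bdd_below ((\<lambda>F. F y) ` S)"
  using sub DplusD(1) by (intro bdd_belowI[of _ 0]) auto

lemma P_le: "F \<in> S \<Longrightarrow> Pinf S y \<le> F y"
  unfolding Pinf_def using P_bdd by (rule cINF_lower)

lemma P_ge0: "0 \<le> Pinf S y"
  unfolding Pinf_def using ne sub DplusD(1) by (intro cINF_greatest) auto

lemma P_le1: "Pinf S y \<le> 1"
proof -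
  obtain F where "F \<in> S" using ne by blast
  then show ?thesis using P_le[of F y] sub DplusD(2)[of F y] by auto
qed

lemma P_mono: "y \<le> y' \<Longrightarrow> Pinf S y \<le> Pinf S y'"
  unfolding Pinf_def using ne
  by (intro cINF_greatest) (auto intro: order_trans[OF cINF_lower[OF P_bdd] Dplus_monoD] dest: subsetD[OF sub])

lemma P_zero: "y \<le> 0 \<Longrightarrow> Pinf S y = 0"
proof -
  assume y: "y \<le> 0"
  have "(INF F\<in>S. F y) = (INF F\<in>S. 0)"
    using sub y DplusD(4) by (intro INF_cong) auto
  then show ?thesis unfolding Pinf_def using ne by simp
qed

lemma Pz_bdd: "bdd_above ((\<lambda>z. Pinf S (ereal z)) ` A)"
  using P_le1 by (intro bdd_aboveI[of _ 1]) auto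

lemma Pz_le_G: "z < x \<Longrightarrow> Pinf S (ereal z) \<le> glbD S (ereal x)"
  unfolding glbD_def using Pz_bdd by (auto intro!: cSUP_upper)

lemma G_le_P: "glbD S (ereal x) \<le> Pinf S (ereal x)"
  unfolding glbD_def by (auto intro!: cSUP_least P_mono)

lemma G_ge0: "0 \<le> glbD S y"
proof (cases y)
  case (real x)
  then show ?thesis using Pz_le_G[of "x - 1" x] P_ge0[of "ereal (x - 1)"] by auto
qed (auto simp: glbD_def)

lemma G_le1: "glbD S y \<le> 1"
proof (cases y)
  case (real x)
  then show ?thesis using G_le_P[of x] P_le1[of "ereal x"] by auto
qed (auto simp: glbD_def)

lemma G_mono_real: "x \<le> x' \<Longrightarrow> glbD S (ereal x) \<le> glbD S (ereal x')"
  unfolding glbD_def by (auto intro!: cSUP_subset_mono Pz_bdd)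

lemma G_mono: "mono (glbD S)"
proof (rule monoI)
  fix y y' :: ereal assume "y \<le> y'"
  then show "glbD S y \<le> glbD S y'"
  proof (cases y)
    case (real r)
    show ?thesis
    proof (cases y')
      case (real r')
      then show ?thesis using \<open>y = ereal r\<close> \<open>y \<le> y'\<close> G_mono_real by auto
    qed (use real \<open>y \<le> y'\<close> G_le1 in auto)
  qed (use \<open>y \<le> y'\<close> G_ge0 G_le1 in auto)
qed

lemma G_lc: "((\<lambda>y. glbD S (ereal y)) \<longlongrightarrow> glbD S (ereal x)) (at_left x)"
proof (rule order_tendstoI)
  fix a assume a: "a < glbD S (ereal x)"
  then have "a < (SUP z\<in>{..<x}. Pinf S (ereal z))" by (simp add: glbD_def)
  then obtain z where z: "z < x" "a < Pinf S (ereal z)"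
    using less_cSUP_iff[OF _ Pz_bdd, of "{..<x}" a] by auto
  show "eventually (\<lambda>y. a < glbD S (ereal y)) (at_left x)"
    unfolding eventually_at_left_field using z
    by (intro exI[of _ z]) (auto intro: less_le_trans[OF _ Pz_le_G])
next
  fix a assume a: "glbD S (ereal x) < a"
  show "eventually (\<lambda>y. glbD S (ereal y) < a) (at_left x)"
    unfolding eventually_at_left_field using a
    by (intro exI[of _ "x - 1"]) (auto intro: le_less_trans[OF G_mono_real[of _ x]])
qed

lemma G_zero: "y \<le> 0 \<Longrightarrow> glbD S y = 0"
proof (cases y)
  case (real x)
  assume "y \<le> 0"
  then have "x \<le> 0" using real by simp
  then have "(SUP z\<in>{..<x}. Pinf S (ereal z)) = (SUP z\<in>{..<x}. 0)"
    by (intro SUP_cong) (auto intro!: P_zero)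
  then show ?thesis using real by (simp add: glbD_def)
qed (auto simp: glbD_def)

lemma G_Dplus: "glbD S \<in> Dplus"
  unfolding Dplus_def using G_ge0 G_le1 G_mono G_lc G_zero by (auto simp: glbD_def)

lemma G_is_dinf: "is_dinf S (glbD S)"
  unfolding is_dinf_def
proof (intro conjI ballI allI impI)
  show "glbD S \<in> Dplus" by (rule G_Dplus)
next
  fix F assume F: "F \<in> S"
  show "dle (glbD S) F" unfolding dle_def
  proof
    fix y show "glbD S y \<le> F y"
    proof (cases y)
      case (real x)
      have "(SUP z\<in>{..<x}. Pinf S (ereal z)) \<le> F (ereal x)"
        by (intro cSUP_least) (auto intro: order_trans[OF P_le[OF F] Dplus_monoD[OF subsetD[OF sub F]]])
      then show ?thesis using real by (simp add: glbD_def)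
    qed (use F DplusD(5)[OF subsetD[OF sub F]] DplusD(1)[OF subsetD[OF sub F]] in auto)
  qed
next
  fix K assume K: "K \<in> Dplus" "\<forall>G\<in>S. dle K G"
  show "dle K (glbD S)" unfolding dle_def
  proof
    fix y show "K y \<le> glbD S y"
    proof (cases y)
      case (real x)
      have "K (ereal z) \<le> glbD S (ereal x)" if "z < x" for z
      proof -
        have "K (ereal z) \<le> Pinf S (ereal z)"
          unfolding Pinf_def using ne K by (intro cINF_greatest) (auto simp: dle_def)
        then show ?thesis using Pz_le_G[OF that] by linarith
      qed
      then have "K (ereal x) \<le> glbD S (ereal x)"
        by (intro tendsto_upperbound[OF DplusD(6)[OF K(1)]])
           (auto simp: eventually_at_left_field intro!: exI[of _ "x - 1"])
      then show ?thesis using real by simp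
    next
      case PInf then show ?thesis using K DplusD by (auto simp: glbD_def)
    next
      case MInf then show ?thesis using Dplus_minf[OF K(1)] by simp
    qed
  qed
qed

end

lemma approx_seq:
  fixes S :: "'b set" and I :: "bool \<Rightarrow> 'b \<Rightarrow> dfun"
  assumes ne: "S \<noteq> {}" and D: "\<And>s b. s \<in> S \<Longrightarrow> I b s \<in> Dplus"
    and dir: "\<And>s t. s \<in> S \<Longrightarrow> t \<in> S \<Longrightarrow> \<exists>u\<in>S. \<forall>b. dle (I b u) (I b s) \<and> dle (I b u) (I b t)"
  shows "\<exists>u. (\<forall>n. u n \<in> S) \<and> (\<forall>b. weak_conv (\<lambda>n. I b (u n)) (glbD (I b ` S)))"
proof -
  define P where "P b = Pinf (I b ` S)" for b
  have neb: "I b ` S \<noteq> {}" for b using ne by auto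
  have subb: "I b ` S \<subseteq> Dplus" for b using D by auto
  have P_le': "s \<in> S \<Longrightarrow> P b y \<le> I b s y" for s b y
    unfolding P_def using P_le[OF neb subb] by blast
  have exc: "\<exists>c\<in>S. I b c (ereal (of_rat q)) < P b (ereal (of_rat q)) + inverse (real (Suc m))" for q m b
  proof -
    have "(INF F\<in>I b ` S. F (ereal (of_rat q))) < P b (ereal (of_rat q)) + inverse (real (Suc m))"
      unfolding P_def Pinf_def by simp
    then show ?thesis using cINF_less_iff[OF neb P_bdd[OF neb subb]] by auto
  qed
  define c where "c = (\<lambda>(q::rat, m::nat, b::bool). SOME c. c \<in> S \<and>
       I b c (ereal (of_rat q)) < P b (ereal (of_rat q)) + inverse (real (Suc m)))"
  have c: "c (q,m,b) \<in> S" "I b (c (q,m,b)) (ereal (of_rat q)) < P b (ereal (of_rat q)) + inverse (real (Suc m))"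
    for q m b
    using someI_ex[OF exc[of b q m, unfolded Bex_def]] unfolding c_def by auto
  define J where "J s t = (SOME u. u \<in> S \<and> (\<forall>b. dle (I b u) (I b s) \<and> dle (I b u) (I b t)))" for s t
  have J: "J s t \<in> S" "dle (I b (J s t)) (I b s)" "dle (I b (J s t)) (I b t)" if "s \<in> S" "t \<in> S" for s t b
    using someI_ex[OF dir[OF that, unfolded Bex_def]] unfolding J_def by auto
  obtain s0 where s0: "s0 \<in> S" using ne by blast
  define u where "u = rec_nat s0 (\<lambda>n x. J x (c (from_nat n)))"
  have u0: "u 0 = s0" and uS: "u (Suc n) = J (u n) (c (from_nat n))" for n unfolding u_def by simp_all
  have cin: "c (from_nat n) \<in> S" for n
  proof -
    obtain q m b where "(from_nat n :: rat \<times> nat \<times> bool) = (q, m, b)" by (metis prod_cases3)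
    then show ?thesis using c(1)[of q m b] by simp
  qed
  have uin: "u n \<in> S" for n
  proof (induction n)
    case 0 then show ?case using s0 u0 by simp
  next
    case (Suc n)
    show ?case using J(1)[OF Suc cin] uS by simp
  qed
  have dec1: "I b (u (Suc n)) y \<le> I b (u n) y" for b n y
    using J(2)[OF uin cin] uS unfolding dle_def by metis
  have dec: "m \<le> n \<Longrightarrow> I b (u n) y \<le> I b (u m) y" for b m n y
  proof (induction n rule: dec_induct)
    case base then show ?case by simp
  next
    case (step n) then show ?case using dec1[of b n y] by linarith
  qed
  have ratconv: "(\<lambda>n. I b (u n) (ereal (of_rat q))) \<longlonglongrightarrow> P b (ereal (of_rat q))" for b q
    unfolding LIMSEQ_iff
  proof (intro allI impI)
    fix r :: real assume r: "0 < r"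
    obtain m where m: "inverse (real (Suc m)) < r" using reals_Archimedean[OF r] by blast
    define N where "N = Suc (to_nat (q, m, b))"
    have "I b (u N) (ereal (of_rat q)) \<le> I b (c (q,m,b)) (ereal (of_rat q))"
      using J(3)[OF uin[of "to_nat (q,m,b)"] cin[of "to_nat (q,m,b)"], of b] unfolding N_def uS dle_def by simp
    then have uN: "I b (u N) (ereal (of_rat q)) < P b (ereal (of_rat q)) + r" using c(2)[of b q m] m by linarith
    show "\<exists>no. \<forall>n\<ge>no. norm (I b (u n) (ereal (of_rat q)) - P b (ereal (of_rat q))) < r"
    proof (intro exI allI impI)
      fix n assume "N \<le> n"
      then have "I b (u n) (ereal (of_rat q)) \<le> I b (u N) (ereal (of_rat q))" by (rule dec)
      moreover have "P b (ereal (of_rat q)) \<le> I b (u n) (ereal (of_rat q))" using P_le' uin by blast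
      ultimately show "norm (I b (u n) (ereal (of_rat q)) - P b (ereal (of_rat q))) < r" using uN by simp
    qed
  qed
  have wc: "weak_conv (\<lambda>n. I b (u n)) (glbD (I b ` S))" for b
    unfolding weak_conv_def
  proof (intro allI impI)
    fix x :: real
    define G where "G = glbD (I b ` S)"
    assume "isCont (\<lambda>y. glbD (I b ` S) (ereal y)) x"
    then have cont: "(\<lambda>y. G (ereal y)) \<midarrow>x\<rightarrow> G (ereal x)" unfolding isCont_def G_def .
    show "(\<lambda>n. I b (u n) (ereal x)) \<longlonglongrightarrow> glbD (I b ` S) (ereal x)"
      unfolding LIMSEQ_iff G_def[symmetric]
    proof (intro allI impI)
      fix r :: real assume r: "0 < r"
      obtain d where d: "d > 0" "\<And>z. z \<noteq> x \<and> norm (z - x) < d \<Longrightarrow> norm (G (ereal z) - G (ereal x)) < r / 2"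
        using LIM_D[OF cont, of "r/2"] r by auto
      obtain q' where q': "q' \<in> \<rat>" "x < q'" "q' < x + d / 2" using Rats_dense_in_real[of x "x + d/2"] d by auto
      then obtain q where q: "q' = of_rat q" by (cases rule: Rats_cases) auto
      have "P b (ereal (of_rat q)) \<le> G (ereal (x + d/2))"
        unfolding P_def G_def using Pz_le_G[OF neb subb] q q' by simp
      moreover have "norm (G (ereal (x + d/2)) - G (ereal x)) < r / 2" using d by (intro d(2)) auto
      then have "G (ereal (x + d/2)) - G (ereal x) < r / 2" by (simp only: real_norm_def abs_less_iff)
      ultimately have Pq: "P b (ereal (of_rat q)) < G (ereal x) + r / 2" by linarith
      obtain N where N: "\<And>n. n \<ge> N \<Longrightarrow> norm (I b (u n) (ereal (of_rat q)) - P b (ereal (of_rat q))) < r / 2"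
        using ratconv[of b q, unfolded LIMSEQ_iff] r by (meson half_gt_zero)
      show "\<exists>no. \<forall>n\<ge>no. norm (I b (u n) (ereal x) - G (ereal x)) < r"
      proof (intro exI allI impI)
        fix n assume n: "N \<le> n"
        have "I b (u n) (ereal x) \<le> I b (u n) (ereal (of_rat q))"
          using q q' D[OF uin] by (intro Dplus_monoD) auto
        moreover have "G (ereal x) \<le> P b (ereal x)" unfolding G_def P_def by (rule G_le_P[OF neb subb])
        moreover have "P b (ereal x) \<le> I b (u n) (ereal x)" using P_le' uin by blast
        moreover have "I b (u n) (ereal (of_rat q)) < P b (ereal (of_rat q)) + r / 2" using N[OF n] by (simp only: real_norm_def abs_less_iff) linarith
        ultimately show "norm (I b (u n) (ereal x) - G (ereal x)) < r" using Pq by simp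
      qed
    qed
  qed
  show ?thesis using uin wc by blast
qed

lemma I_msum:
  assumes tf: "triangle_function \<tau>" and td: "tf_distributive \<tau>" and sr: "sigma_ring \<Omega> \<Sigma>"
    and d1: "decomposable \<tau> \<Sigma> \<gamma>1" and d2: "decomposable \<tau> \<Sigma> \<gamma>2" and E: "E \<in> \<Sigma>"
  shows "valid_simple \<Sigma> s \<Longrightarrow> simple_int \<tau> (msum \<tau> \<gamma>1 \<gamma>2) s E = \<tau> (simple_int \<tau> \<gamma>1 s E) (simple_int \<tau> \<gamma>2 s E)"
proof (induction s)
  case Nil then show ?case by (simp add: tau_eps_r[OF tf] eps0_Dplus)
next
  case (Cons p s)
  obtain x G where p: "p = (x,G)" by (cases p)
  have v: "0 \<le> x" "G \<in> \<Sigma>" "valid_simple \<Sigma> s" using Cons.prems unfolding p valid_Cons by auto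
  have EG: "E \<inter> G \<in> \<Sigma>" using v E by (intro sr_int[OF sr])
  have g: "\<gamma>1 (E \<inter> G) \<in> Dplus" "\<gamma>2 (E \<inter> G) \<in> Dplus"
    using gam_Dplus[OF tf td sr d1 EG] gam_Dplus[OF tf td sr d2 EG] .
  have "smult_d x (msum \<tau> \<gamma>1 \<gamma>2 (E \<inter> G)) = \<tau> (smult_d x (\<gamma>1 (E \<inter> G))) (smult_d x (\<gamma>2 (E \<inter> G)))"
    unfolding msum_def using smult_tau[OF tf td sr d1 v(1) g] .
  moreover have "smult_d x (\<gamma>1 (E \<inter> G)) \<in> Dplus" "smult_d x (\<gamma>2 (E \<inter> G)) \<in> Dplus"
    using g v by (auto intro: smult_Dplus)
  moreover have "simple_int \<tau> \<gamma>1 s E \<in> Dplus" "simple_int \<tau> \<gamma>2 s E \<in> Dplus"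
    using I_Dplus[OF tf td sr d1 v(3) E] I_Dplus[OF tf td sr d2 v(3) E] .
  ultimately show ?case unfolding p using Cons v by (simp add: tau_swap4[OF tf])
qed

lemma le_from_cont_points:
  assumes K: "K \<in> Dplus" and H: "H \<in> Dplus"
    and c: "\<And>x::real. isCont (\<lambda>y. H (ereal y)) x \<Longrightarrow> K (ereal x) \<le> H (ereal x)"
  shows "dle K H"
  unfolding dle_def
proof
  fix y show "K y \<le> H y"
  proof (cases y)
    case (real x)
    have "K (ereal x) \<le> H (ereal x)"
    proof (rule tendsto_upperbound[OF DplusD(6)[OF K]])
      show "\<not> trivial_limit (at_left x)" by simp
      show "\<forall>\<^sub>F z in at_left x. K (ereal z) \<le> H (ereal x)"
        unfolding eventually_at_left_field
      proof (intro exI[of _ "x - 1"] conjI allI impI)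
        fix z assume z: "x - 1 < z" "z < x"
        have mH: "mono (\<lambda>y. H (ereal y))" using DplusD(3)[OF H] by (auto simp: mono_def)
        obtain w where w: "w \<in> {z<..<x}" "w \<notin> {a. \<not> isCont (\<lambda>y. H (ereal y)) a}"
          using open_minus_countable[OF mono_ctble_discont[OF mH], of "{z<..<x}"] z by auto
        have "K (ereal z) \<le> K (ereal w)" using w by (intro Dplus_monoD[OF K]) auto
        also have "\<dots> \<le> H (ereal w)" using w c by auto
        also have "\<dots> \<le> H (ereal x)" using w by (intro Dplus_monoD[OF H]) auto
        finally show "K (ereal z) \<le> H (ereal x)" .
      qed simp
    qed
    then show ?thesis using real by simp
  next
    case PInf then show ?thesis using DplusD(5)[OF K] DplusD(5)[OF H] by simp
  next
    case MInf then show ?thesis using Dplus_minf[OF K] Dplus_minf[OF H] by simp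
  qed
qed

theorem theorem5p5:
  fixes \<tau> :: "dfun \<Rightarrow> dfun \<Rightarrow> dfun" and \<Omega> :: "'a set" and \<Sigma> :: "'a set set"
    and \<gamma>1 \<gamma>2 :: "'a set \<Rightarrow> dfun" and f :: "'a \<Rightarrow> ennreal" and E :: "'a set"
  assumes "\<Omega> \<noteq> {}" and "sigma_ring \<Omega> \<Sigma>"
    and "triangle_function \<tau>" and "tf_continuous \<tau>" and "tf_distributive \<tau>"
    and "decomposable \<tau> \<Sigma> \<gamma>1" and "cont_below \<Sigma> \<gamma>1"
    and "decomposable \<tau> \<Sigma> \<gamma>2" and "cont_below \<Sigma> \<gamma>2"
    and "measurable_fn \<Omega> \<Sigma> f" and "E \<in> \<Sigma>"
    and "d_integrable \<tau> \<Sigma> \<gamma>1 f E" and "d_integrable \<tau> \<Sigma> \<gamma>2 f E"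
  shows "d_integrable \<tau> \<Sigma> (msum \<tau> \<gamma>1 \<gamma>2) f E
    \<and> d_integral \<tau> \<Sigma> (msum \<tau> \<gamma>1 \<gamma>2) f E = \<tau> (d_integral \<tau> \<Sigma> \<gamma>1 f E) (d_integral \<tau> \<Sigma> \<gamma>2 f E)"
proof -
  note sr = assms(2) and tf = assms(3) and tc = assms(4) and td = assms(5)
    and d1 = assms(6) and d2 = assms(8) and E = assms(11)
  define S where "S = S_set \<Sigma> f E"
  define g where "g b = (if b then \<gamma>1 else \<gamma>2)" for b
  define I where "I b s = simple_int \<tau> (g b) s E" for b s
  have dg: "decomposable \<tau> \<Sigma> (g b)" for b using d1 d2 unfolding g_def by auto
  have Sv: "s \<in> S \<Longrightarrow> valid_simple \<Sigma> s" for s unfolding S_def S_set_def by auto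
  have "[] \<in> S" unfolding S_def S_set_def by simp
  then have ne: "S \<noteq> {}" by blast
  have D: "s \<in> S \<Longrightarrow> I b s \<in> Dplus" for s b
    unfolding I_def using I_Dplus[OF tf td sr dg Sv E] .
  have dir: "\<exists>u\<in>S. \<forall>b. dle (I b u) (I b s) \<and> dle (I b u) (I b t)" if st: "s \<in> S" "t \<in> S" for s t
  proof (intro bexI allI)
    have vs: "valid_simple \<Sigma> s" "valid_simple \<Sigma> t" using st Sv by auto
    have vu: "valid_simple \<Sigma> (join s t)" using join_valid[OF sr vs] .
    have ev: "simple_eval (join s t) \<omega> = max (simple_eval s \<omega>) (simple_eval t \<omega>)" for \<omega>
      using join_eval[OF sr vs] .
    show "join s t \<in> S" using st vu unfolding S_def S_set_def by (auto simp: ev)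
    fix b
    show "dle (I b (join s t)) (I b s) \<and> dle (I b (join s t)) (I b t)"
      unfolding I_def using I_mono[OF tf td sr dg vs(1) vu E] I_mono[OF tf td sr dg vs(2) vu E]
      by (simp add: ev)
  qed
  obtain u where u: "\<And>n. u n \<in> S" "\<And>b. weak_conv (\<lambda>n. I b (u n)) (glbD (I b ` S))"
    using approx_seq[of S I, OF ne D dir] by blast
  define G where "G b = glbD (I b ` S)" for b
  have neb: "I b ` S \<noteq> {}" for b using ne by auto
  have subb: "I b ` S \<subseteq> Dplus" for b using D by auto
  have Gi: "is_dinf (I b ` S) (G b)" for b unfolding G_def using G_is_dinf[OF neb subb] .
  have GD: "G b \<in> Dplus" for b using Gi unfolding is_dinf_def by blast
  have Gle: "s \<in> S \<Longrightarrow> dle (G b) (I b s)" for s b using Gi unfolding is_dinf_def by blast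
  have int_eq: "d_integral \<tau> \<Sigma> (g b) f E = G b" for b
    unfolding d_integral_def
  proof (rule the_equality)
    show "is_dinf ((\<lambda>s. simple_int \<tau> (g b) s E) ` S_set \<Sigma> f E) (G b)"
      using Gi unfolding I_def S_def .
    show "is_dinf ((\<lambda>s. simple_int \<tau> (g b) s E) ` S_set \<Sigma> f E) H \<Longrightarrow> H = G b" for H
      using Gi is_dinf_unique unfolding I_def S_def by blast
  qed
  define M where "M = (\<lambda>s. simple_int \<tau> (msum \<tau> \<gamma>1 \<gamma>2) s E) ` S_set \<Sigma> f E"
  have Meq: "simple_int \<tau> (msum \<tau> \<gamma>1 \<gamma>2) s E = \<tau> (I True s) (I False s)" if "s \<in> S" for s
    unfolding I_def g_def using I_msum[OF tf td sr d1 d2 E Sv[OF that]] by simp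
  define H where "H = \<tau> (G True) (G False)"
  have HD: "H \<in> Dplus" unfolding H_def using GD by (simp add: tau_Dplus[OF tf])
  have Hlow: "dle H (simple_int \<tau> (msum \<tau> \<gamma>1 \<gamma>2) s E)" if "s \<in> S" for s
    unfolding Meq[OF that] H_def using that GD D Gle by (intro tau_mono[OF tf]) auto
  have Hi: "is_dinf M H"
    unfolding is_dinf_def
  proof (intro conjI ballI impI)
    show "H \<in> Dplus" by (rule HD)
  next
    fix F assume "F \<in> M" then show "dle H F" using Hlow unfolding M_def S_def by blast
  next
    fix K assume K: "K \<in> Dplus" "\<forall>F\<in>M. dle K F"
    have Kle: "dle K (\<tau> (I True (u n)) (I False (u n)))" for n
      using K(2) Meq[OF u(1)[of n]] u(1)[of n] unfolding M_def S_def by force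
    have wcH: "weak_conv (\<lambda>n. \<tau> (I True (u n)) (I False (u n))) H"
      unfolding H_def G_def
      using tc[unfolded tf_continuous_def, rule_format, of "\<lambda>n. I True (u n)" "glbD (I True ` S)"
          "\<lambda>n. I False (u n)" "glbD (I False ` S)"] u D[OF u(1)] GD[unfolded G_def] by blast
    show "dle K H"
    proof (rule le_from_cont_points[OF K(1) HD])
      fix x :: real assume "isCont (\<lambda>y. H (ereal y)) x"
      then have lim: "(\<lambda>n. \<tau> (I True (u n)) (I False (u n)) (ereal x)) \<longlonglongrightarrow> H (ereal x)"
        using wcH unfolding weak_conv_def by blast
      show "K (ereal x) \<le> H (ereal x)"
        using lim Kle unfolding dle_def by (intro LIMSEQ_le_const) auto
    qed
  qed
  have "d_integral \<tau> \<Sigma> (msum \<tau> \<gamma>1 \<gamma>2) f E = H"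
    unfolding d_integral_def
  proof (rule the_equality)
    show "is_dinf ((\<lambda>s. simple_int \<tau> (msum \<tau> \<gamma>1 \<gamma>2) s E) ` S_set \<Sigma> f E) H" using Hi unfolding M_def .
    show "is_dinf ((\<lambda>s. simple_int \<tau> (msum \<tau> \<gamma>1 \<gamma>2) s E) ` S_set \<Sigma> f E) H' \<Longrightarrow> H' = H" for H'
      using Hi is_dinf_unique unfolding M_def by blast
  qed
  moreover have "d_integrable \<tau> \<Sigma> (msum \<tau> \<gamma>1 \<gamma>2) f E"
    unfolding d_integrable_def using HD Hlow unfolding S_def by blast
  moreover have "d_integral \<tau> \<Sigma> \<gamma>1 f E = G True" "d_integral \<tau> \<Sigma> \<gamma>2 f E = G False"
    using int_eq[of True] int_eq[of False] unfolding g_def by simp_all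
  ultimately show ?thesis unfolding H_def by simp
qed

end
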